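(* Let $a,b,c\in\mathbb{R}$ be such that $$B=\begin{pmatrix}1&a&b\\ a&1&c\\ b&c&1\end{pmatrix}$$ is positive semidefinite. Let $\mathbb{I}\subseteq[0,\infty)$ be an interval and $f:\mathbb{I}\to[-1,1]$ a strictly decreasing function with range $[-1,1]$ satisfying $f(p+q)=f(p)f(q)-\sqrt{1-f(p)^2}\sqrt{1-f(q)^2}$ whenever $p,q,p+q\in\mathbb{I}$. Let $g:[0,\infty)\to[0,\infty)$ be metric-preserving and set $h=g\circ f^{-1}$. Then $$h(a)\le h(b)+h(c).$$ Consequently, for every real $k\ge2$, $$\sqrt[k]{1-|a|^k}\le\sqrt[k]{1-|b|^k}+\sqrt[k]{1-|c|^k}.$$
   Context: A function $g:[0,\infty)\to[0,\infty)$ is metric-preserving if for every metric space $(M,d)$, the function $g\circ d$ is again a metric on $M$. *)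

theory Defs
  imports "HOL-Analysis.Analysis"
begin

definition psd :: "real^'n^'n \<Rightarrow> bool" where
  "psd A \<longleftrightarrow> transpose A = A \<and> (\<forall>x. 0 \<le> x \<bullet> (A *v x))"

text \<open>Metric-preserving functions g : [0,oo) -> [0,oo): for every metric space (M,d),
  g o d is again a metric on M.  Metric spaces are taken with carrier a set of reals
  (HOL cannot quantify over types inside a definition).\<close>
definition metric_preserving :: "(real \<Rightarrow> real) \<Rightarrow> bool" where
  "metric_preserving g \<longleftrightarrow> g ` {0..} \<subseteq> {0..} \<and>
     (\<forall>(M::real set) d. Metric_space M d \<longrightarrow> Metric_space M (\<lambda>x y. g (d x y)))"

end

theory Submission
  imports Defs
begin

lemma psdQ:
  fixes a b c :: real
  assumes B: "psd (vector [vector [1, a, b], vector [a, 1, c], vector [b, c, 1]] :: real^3^3)"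
  shows "0 \<le> x1\<^sup>2 + x2\<^sup>2 + x3\<^sup>2 + 2*a*x1*x2 + 2*b*x1*x3 + 2*c*x2*x3"
proof -
  have "0 \<le> (vector [x1,x2,x3] :: real^3) \<bullet> ((vector [vector [1, a, b], vector [a, 1, c], vector [b, c, 1]] :: real^3^3) *v vector [x1,x2,x3])"
    using B unfolding psd_def by blast
  also have "\<dots> = x1\<^sup>2 + x2\<^sup>2 + x3\<^sup>2 + 2*a*x1*x2 + 2*b*x1*x3 + 2*c*x2*x3"
    by (simp add: inner_vec_def matrix_vector_mult_def sum_3 power2_eq_square algebra_simps)
  finally show ?thesis .
qed

lemma Qlem:
  fixes a b c :: real
  assumes Q: "\<And>x1 x2 x3. 0 \<le> x1\<^sup>2 + x2\<^sup>2 + x3\<^sup>2 + 2*a*x1*x2 + 2*b*x1*x3 + 2*c*x2*x3"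
  shows "b\<^sup>2 \<le> 1" "c\<^sup>2 \<le> 1" "\<bar>a - b*c\<bar> \<le> sqrt (1 - b\<^sup>2) * sqrt (1 - c\<^sup>2)"
proof -
  show b1: "b\<^sup>2 \<le> 1" using Q[of 1 0 "-b"] by (simp add: power2_eq_square)
  show c1: "c\<^sup>2 \<le> 1" using Q[of 0 1 "-c"] by (simp add: power2_eq_square)
  define uB where "uB = sqrt (1 - b\<^sup>2)"
  define uC where "uC = sqrt (1 - c\<^sup>2)"
  have uB: "uB \<ge> 0" "uB\<^sup>2 = 1 - b\<^sup>2" using b1 by (auto simp: uB_def)
  have uC: "uC \<ge> 0" "uC\<^sup>2 = 1 - c\<^sup>2" using c1 by (auto simp: uC_def)
  have lo: "a - b*c \<ge> - (uB * uC)"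
  proof (cases "uB = 0 \<or> uC = 0")
    case True
    have "a = b*c"
    proof (cases "uB = 0")
      case True
      hence "b\<^sup>2 = 1" using uB by simp
      hence "0 \<le> - (a - b*c)\<^sup>2" using Q[of 1 "b*c - a" "-b"]
        by (simp add: power2_eq_square algebra_simps)
      thus ?thesis by (smt (verit) zero_le_power2 zero_eq_power2)
    next
      case False
      hence "uC = 0" using \<open>uB = 0 \<or> uC = 0\<close> by simp
      hence "c\<^sup>2 = 1" using uC by simp
      have e: "(b*c - a)\<^sup>2 + 1\<^sup>2 + (-c)\<^sup>2 + 2*a*(b*c - a)*1 + 2*b*(b*c - a)*(-c) + 2*c*1*(-c) = - (a - b*c)\<^sup>2 + (1 - c\<^sup>2)"
        by (simp add: power2_eq_square algebra_simps)
      hence "0 \<le> - (a - b*c)\<^sup>2" using Q[of "b*c - a" 1 "-c"] \<open>c\<^sup>2 = 1\<close> by linarith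
      thus ?thesis by (smt (verit) zero_le_power2 zero_eq_power2)
    qed
    thus ?thesis using uB uC by simp
  next
    case False
    hence pos: "uB * uC > 0" using uB uC by (simp add: less_le)
    have e: "uC\<^sup>2 + uB\<^sup>2 + (-(b * uC + c * uB))\<^sup>2 + 2*a*uC*uB + 2*b*uC*(-(b * uC + c * uB)) + 2*c*uB*(-(b * uC + c * uB)) = uC\<^sup>2*(1-b\<^sup>2) + uB\<^sup>2*(1-c\<^sup>2) + 2*(uB * uC)*(a - b*c)"
      by (simp add: power2_eq_square algebra_simps)
    have e2: "uC\<^sup>2*(1-b\<^sup>2) + uB\<^sup>2*(1-c\<^sup>2) + 2*(uB * uC)*(a - b*c) = 2*(uB * uC)*(uB * uC + a - b*c)"
      by (simp only: uB(2)[symmetric] uC(2)[symmetric]) (simp add: power2_eq_square algebra_simps)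
    have "0 \<le> 2*(uB * uC)*(uB * uC + a - b*c)"
      using Q[of uC uB "-(b * uC + c * uB)"] e e2 by linarith
    hence "0 \<le> uB * uC + a - b*c" using pos by (simp add: zero_le_mult_iff)
    thus ?thesis by simp
  qed
  have hi: "-a - b*(-c) \<ge> - (uB * uC)"
  proof (cases "uB = 0 \<or> uC = 0")
    case True
    have "a = b*c"
    proof (cases "uB = 0")
      case True
      hence "b\<^sup>2 = 1" using uB by simp
      hence "0 \<le> - (a - b*c)\<^sup>2" using Q[of 1 "b*c - a" "-b"]
        by (simp add: power2_eq_square algebra_simps)
      thus ?thesis by (smt (verit) zero_le_power2 zero_eq_power2)
    next
      case False
      hence "uC = 0" using \<open>uB = 0 \<or> uC = 0\<close> by simp
      hence "c\<^sup>2 = 1" using uC by simp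
      have e: "(b*c - a)\<^sup>2 + 1\<^sup>2 + (-c)\<^sup>2 + 2*a*(b*c - a)*1 + 2*b*(b*c - a)*(-c) + 2*c*1*(-c) = - (a - b*c)\<^sup>2 + (1 - c\<^sup>2)"
        by (simp add: power2_eq_square algebra_simps)
      hence "0 \<le> - (a - b*c)\<^sup>2" using Q[of "b*c - a" 1 "-c"] \<open>c\<^sup>2 = 1\<close> by linarith
      thus ?thesis by (smt (verit) zero_le_power2 zero_eq_power2)
    qed
    thus ?thesis using uB uC by simp
  next
    case False
    hence pos: "uB * uC > 0" using uB uC by (simp add: less_le)
    have e: "uC\<^sup>2 + (-uB)\<^sup>2 + (-(b * uC - c * uB))\<^sup>2 + 2*a*uC*(-uB) + 2*b*uC*(-(b * uC - c * uB)) + 2*c*(-uB)*(-(b * uC - c * uB)) = uC\<^sup>2*(1-b\<^sup>2) + uB\<^sup>2*(1-c\<^sup>2) + 2*(uB * uC)*(-a + b*c)"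
      by (simp add: power2_eq_square algebra_simps)
    have e2: "uC\<^sup>2*(1-b\<^sup>2) + uB\<^sup>2*(1-c\<^sup>2) + 2*(uB * uC)*(-a + b*c) = 2*(uB * uC)*(uB * uC - a + b*c)"
      by (simp only: uB(2)[symmetric] uC(2)[symmetric]) (simp add: power2_eq_square algebra_simps)
    have "0 \<le> 2*(uB * uC)*(uB * uC - a + b*c)"
      using Q[of uC "-uB" "-(b * uC - c * uB)"] e e2 by linarith
    hence "0 \<le> uB * uC - a + b*c" using pos by (simp add: zero_le_mult_iff)
    thus ?thesis by simp
  qed
  show "\<bar>a - b*c\<bar> \<le> sqrt (1 - b\<^sup>2) * sqrt (1 - c\<^sup>2)"
    using lo hi unfolding uB_def uC_def by linarith
qed

lemma mp_zero: assumes "metric_preserving g" shows "g 0 = 0"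
proof -
  have "Metric_space {0::real} (\<lambda>x y. 0)" by unfold_locales auto
  hence "Metric_space {0::real} (\<lambda>x y. g ((\<lambda>x y. 0) x y))"
    using assms unfolding metric_preserving_def by blast
  then show ?thesis using Metric_space.zero[of "{0::real}" "\<lambda>x y. g 0" 0 0] by simp
qed

lemma mp_nonneg: assumes "metric_preserving g" "x \<ge> 0" shows "g x \<ge> 0"
  using assms unfolding metric_preserving_def by auto

lemma mp_tri:
  assumes g: "metric_preserving g" and nn: "x \<ge> 0" "y \<ge> 0" "z \<ge> 0"
    and t: "x \<le> y + z" "y \<le> x + z" "z \<le> x + y"
  shows "g x \<le> g y + g z"
proof (cases "x = 0 \<or> y = 0 \<or> z = 0")
  case True
  have g0: "g 0 = 0" using mp_zero[OF g] .
  show ?thesis using True t nn g0 mp_nonneg[OF g, of y] mp_nonneg[OF g, of z]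
    by (smt (verit))
next
  case False
  define d where "d = (\<lambda>u v::real. if u = v then 0 else if u + v = 1 then z else if u + v = 2 then y else x)"
  have "Metric_space {0::real,1,2} d"
  proof
    show "0 \<le> d u v" for u v using nn by (auto simp: d_def)
    show "d u v = d v u" for u v by (auto simp: d_def add.commute)
    show "u \<in> {0,1,2} \<Longrightarrow> v \<in> {0,1,2} \<Longrightarrow> d u v = 0 \<longleftrightarrow> u = v" for u v
      using False by (auto simp: d_def)
    show "u \<in> {0,1,2} \<Longrightarrow> v \<in> {0,1,2} \<Longrightarrow> w \<in> {0,1,2} \<Longrightarrow> d u w \<le> d u v + d v w" for u v w
      using nn t by (auto simp: d_def)
  qed
  hence "Metric_space {0::real,1,2} (\<lambda>u v. g (d u v))"
    using g unfolding metric_preserving_def by blast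
  hence "g (d 1 2) \<le> g (d 1 0) + g (d 0 2)"
    by (rule Metric_space.triangle) auto
  thus ?thesis by (simp add: d_def)
qed

lemma powr_le_self: "0 \<le> x \<Longrightarrow> x \<le> 1 \<Longrightarrow> 1 \<le> m \<Longrightarrow> x powr m \<le> (x::real)"
  by (cases "x = 0") (auto intro: powr_le_one_le)

lemma powr_le1': "0 \<le> x \<Longrightarrow> x \<le> 1 \<Longrightarrow> 0 \<le> m \<Longrightarrow> x powr m \<le> (1::real)"
  using powr_mono2[of m x 1] by simp

lemma Klem:
  fixes m lam v :: real
  assumes m: "1 \<le> m" and lam: "0 \<le> lam" "lam \<le> 1" and v: "0 \<le> v" "v \<le> 1"
  shows "lam powr m * (1 - (1 - v) powr m) \<le> 1 - (1 - lam * v) powr m"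
proof -
  define X where "X = (1 - v) powr m"
  have X: "0 \<le> X" "X \<le> 1" using v m by (auto simp: X_def intro!: powr_le1')
  have conv: "(1 - lam * v) powr m \<le> (1 - lam) + lam * X"
  proof (cases "v = 1")
    case True
    thus ?thesis using powr_le_self[of "1-lam" m] lam m by (simp add: X_def)
  next
    case False
    hence "1 - v \<in> {0<..}" using v by simp
    from convex_onD[OF powr_convex[OF m] lam(1) lam(2) _ this, of 1]
    have "((1 - lam) *\<^sub>R 1 + lam *\<^sub>R (1 - v)) powr m \<le> (1 - lam) * 1 powr m + lam * (1 - v) powr m"
      by simp
    thus ?thesis by (simp add: X_def algebra_simps)
  qed
  have lm: "lam powr m \<le> lam" using powr_le_self[of lam m] lam m by simp
  have "(lam powr m - lam) * (1 - X) \<le> 0" using lm X by (simp add: mult_nonpos_nonneg)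
  thus ?thesis using conv by (simp add: X_def[symmetric] algebra_simps)
qed

definition GG :: "real \<Rightarrow> real \<Rightarrow> real" where
  "GG k y = (1 - (1 - y\<^sup>2) powr (k/2)) powr (1/k)"

lemma N_nonneg: "0 \<le> (y::real) \<Longrightarrow> y \<le> 1 \<Longrightarrow> 0 < k \<Longrightarrow> 0 \<le> 1 - (1 - y\<^sup>2) powr (k/2)"
  using powr_le1'[of "1 - y\<^sup>2" "k/2"] by (simp add: power_le_one)

lemma GG_mono: assumes "2 \<le> k" "0 \<le> y" "y \<le> y'" "y' \<le> 1" shows "GG k y \<le> GG k y'"
proof -
  have "y\<^sup>2 \<le> y'\<^sup>2" using assms by (simp add: power_mono)
  hence "(1 - y'\<^sup>2) powr (k/2) \<le> (1 - y\<^sup>2) powr (k/2)"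
    using assms by (intro powr_mono2) (auto simp: power_le_one)
  thus ?thesis unfolding GG_def using assms N_nonneg[of y k]
    by (intro powr_mono2) auto
qed

lemma GG_sub:
  assumes k: "2 \<le> k" and yz: "0 \<le> y" "0 \<le> z" "y + z \<le> 1"
  shows "GG k (y + z) \<le> GG k y + GG k z"
proof (cases "y + z = 0")
  case True
  hence "y = 0" "z = 0" using yz by auto
  thus ?thesis by (simp add: GG_def)
next
  case False
  define w where "w = y + z"
  have w: "0 < w" "w \<le> 1" using False yz by (auto simp: w_def)
  define Nw where "Nw = 1 - (1 - w\<^sup>2) powr (k/2)"
  have Nw: "0 \<le> Nw" unfolding Nw_def using N_nonneg[of w k] w k by simp
  have key: "(t / w) * GG k w \<le> GG k t" if t: "0 \<le> t" "t \<le> w" for t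
  proof -
    have lam: "0 \<le> (t/w)\<^sup>2" "(t/w)\<^sup>2 \<le> 1" using t w by (auto simp: power_le_one)
    have "((t/w)\<^sup>2) powr (k/2) * (1 - (1 - w\<^sup>2) powr (k/2)) \<le> 1 - (1 - (t/w)\<^sup>2 * w\<^sup>2) powr (k/2)"
      using Klem[of "k/2" "(t/w)\<^sup>2" "w\<^sup>2"] lam k w by (auto simp: power_le_one)
    moreover have "(t/w)\<^sup>2 * w\<^sup>2 = t\<^sup>2" using w by (simp add: power_divide)
    moreover have "((t/w)\<^sup>2) powr (k/2) = (t/w) powr k"
    proof (cases "t = 0")
      case True thus ?thesis by simp
    next
      case False
      hence "t/w > 0" using t w by simp
      hence "(t/w)\<^sup>2 = (t/w) powr 2" by (simp add: powr_realpow)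
      thus ?thesis by (simp add: powr_powr)
    qed
    ultimately have A: "(t/w) powr k * Nw \<le> 1 - (1 - t\<^sup>2) powr (k/2)" by (simp add: Nw_def)
    have "((t/w) powr k * Nw) powr (1/k) = (t/w) * Nw powr (1/k)"
      using t w k Nw by (simp add: powr_mult powr_powr)
    moreover have "((t/w) powr k * Nw) powr (1/k) \<le> (1 - (1 - t\<^sup>2) powr (k/2)) powr (1/k)"
      using A t w k Nw by (intro powr_mono2) auto
    ultimately show ?thesis by (simp add: GG_def Nw_def)
  qed
  have "(y/w) * GG k w + (z/w) * GG k w = ((y + z)/w) * GG k w" by (simp add: add_divide_distrib distrib_right)
  also have "(y + z)/w = 1" using w by (simp add: w_def)
  finally have "GG k w = (y/w) * GG k w + (z/w) * GG k w" by simp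
  also have "\<dots> \<le> GG k y + GG k z"
    using key[of y] key[of z] yz by (auto simp: w_def)
  finally show ?thesis by (simp add: w_def)
qed

lemma F_GG: assumes "0 \<le> p" "p \<le> 1" "0 < k"
  shows "(1 - p powr k) powr (1/k) = GG k (sqrt (1 - p\<^sup>2))"
proof -
  have "p\<^sup>2 \<le> 1" using assms by (simp add: power_le_one)
  hence "(sqrt (1 - p\<^sup>2))\<^sup>2 = 1 - p\<^sup>2" by simp
  moreover have "(p\<^sup>2) powr (k/2) = p powr k"
  proof (cases "p = 0")
    case True thus ?thesis using assms by simp
  next
    case False
    hence "p\<^sup>2 = p powr 2" using assms by (simp add: powr_realpow)
    thus ?thesis by (simp add: powr_powr)
  qed
  ultimately show ?thesis by (simp add: GG_def)
qed

lemma part2: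
  fixes a b c k :: real
  assumes k: "2 \<le> k" and b1: "b\<^sup>2 \<le> 1" and c1: "c\<^sup>2 \<le> 1" and a1: "a\<^sup>2 \<le> 1"
    and abc: "\<bar>a - b*c\<bar> \<le> sqrt (1 - b\<^sup>2) * sqrt (1 - c\<^sup>2)"
  shows "(1 - \<bar>a\<bar> powr k) powr (1 / k)
              \<le> (1 - \<bar>b\<bar> powr k) powr (1 / k) + (1 - \<bar>c\<bar> powr k) powr (1 / k)"
proof -
  define p q r where "p = \<bar>a\<bar>" "q = \<bar>b\<bar>" "r = \<bar>c\<bar>"
  have pqr: "0 \<le> p" "p \<le> 1" "0 \<le> q" "q \<le> 1" "0 \<le> r" "r \<le> 1"
    using a1 b1 c1 unfolding p_q_r_def by (auto simp: abs_square_le_1)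
  define tp tq tr where "tp = sqrt (1 - p\<^sup>2)" "tq = sqrt (1 - q\<^sup>2)" "tr = sqrt (1 - r\<^sup>2)"
  have tq2: "tq\<^sup>2 = 1 - q\<^sup>2" "tr\<^sup>2 = 1 - r\<^sup>2" "tp\<^sup>2 = 1 - p\<^sup>2"
    using pqr power_le_one[of p 2] power_le_one[of q 2] power_le_one[of r 2] unfolding tp_tq_tr_def by auto
  have tqn: "0 \<le> tp" "0 \<le> tq" "0 \<le> tr" using pqr power_le_one[of p 2] power_le_one[of q 2] power_le_one[of r 2] unfolding tp_tq_tr_def by auto
  have tp1: "tp \<le> 1" "tq \<le> 1" "tr \<le> 1" using pqr power_le_one[of p 2] power_le_one[of q 2] power_le_one[of r 2] unfolding tp_tq_tr_def by auto
  have abc': "p \<ge> q*r - tq*tr"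
  proof -
    have "sqrt (1 - b\<^sup>2) = tq" "sqrt (1 - c\<^sup>2) = tr" unfolding tp_tq_tr_def p_q_r_def by auto
    moreover have "\<bar>b*c\<bar> = q*r" unfolding p_q_r_def by (simp add: abs_mult)
    moreover have "\<bar>b*c\<bar> \<le> \<bar>a\<bar> + \<bar>a - b*c\<bar>" by arith
    moreover have "\<bar>a - b*c\<bar> \<le> tq*tr" using abc calculation(1,2) by simp
    ultimately show ?thesis using \<open>p = \<bar>a\<bar>\<close> by linarith
  qed
  have tpb: "tp \<le> tq + tr"
  proof (cases "q*r \<le> tq*tr")
    case True
    have "(q*r)\<^sup>2 \<le> (tq*tr)\<^sup>2" using power_mono[of "q*r" "tq*tr" 2] True pqr by simp
    hence h: "q\<^sup>2 * r\<^sup>2 \<le> tq\<^sup>2 * tr\<^sup>2" by (simp add: power_mult_distrib)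
    have "tq\<^sup>2 * tr\<^sup>2 = (1 - q\<^sup>2) * (1 - r\<^sup>2)" by (simp only: tq2(1,2))
    also have "\<dots> = 1 - q\<^sup>2 - r\<^sup>2 + q\<^sup>2 * r\<^sup>2" by (simp add: algebra_simps)
    finally have "q\<^sup>2 + r\<^sup>2 \<le> 1" using h by linarith
    hence "r\<^sup>2 \<le> tq\<^sup>2" using tq2 by simp
    hence "r \<le> tq" using tqn pqr by (simp add: power2_le_iff_abs_le)
    moreover have "r\<^sup>2 \<le> r" "tr\<^sup>2 \<le> tr" using pqr tqn tp1 by (simp_all add: power2_eq_square mult_left_le_one_le)
    ultimately have "1 \<le> tq + tr" using tq2 by linarith
    thus ?thesis using tp1 by linarith
  next
    case False
    have "(q*r - tq*tr)\<^sup>2 \<le> p\<^sup>2" using power_mono[of "q*r - tq*tr" p 2] False abc' by simp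
    moreover have "1 - (q*r - tq*tr)\<^sup>2 = (tq*r + q*tr)\<^sup>2"
    proof -
      have "1 - (q*r - tq*tr)\<^sup>2 - (tq*r + q*tr)\<^sup>2 = 1 - (q\<^sup>2 + tq\<^sup>2)*(r\<^sup>2 + tr\<^sup>2)"
        by (simp add: power2_eq_square algebra_simps)
      thus ?thesis using tq2 by simp
    qed
    ultimately have "tp\<^sup>2 \<le> (tq*r + q*tr)\<^sup>2" using tq2 by linarith
    hence "tp \<le> tq*r + q*tr" using power2_le_imp_le[of tp "tq*r + q*tr"] tqn pqr by simp
    moreover have "tq*r \<le> tq" "q*tr \<le> tr" using tqn pqr by (simp_all add: mult_left_le_one_le mult_right_le_one_le)
    ultimately show ?thesis by linarith
  qed
  define y' z' where "y' = min tq tp" "z' = tp - min tq tp"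
  have "GG k tp \<le> GG k y' + GG k z'"
    using GG_sub[OF k, of y' z'] tqn tp1 unfolding y'_z'_def by auto
  also have "GG k y' \<le> GG k tq" using GG_mono[OF k, of y' tq] tqn tp1 unfolding y'_z'_def by auto
  also have "GG k z' \<le> GG k tr" using GG_mono[OF k, of z' tr] tqn tp1 tpb unfolding y'_z'_def by auto
  finally have "GG k tp \<le> GG k tq + GG k tr" by simp
  moreover have "(1 - p powr k) powr (1/k) = GG k tp" using F_GG[of p k] pqr k unfolding tp_tq_tr_def by linarith
  moreover have "(1 - q powr k) powr (1/k) = GG k tq" using F_GG[of q k] pqr k unfolding tp_tq_tr_def by linarith
  moreover have "(1 - r powr k) powr (1/k) = GG k tr" using F_GG[of r k] pqr k unfolding tp_tq_tr_def by linarith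
  ultimately show ?thesis using p_q_r_def by simp
qed

lemma part1_ineq:
  fixes I :: "real set" and f :: "real \<Rightarrow> real" and a b c x y z :: real
  assumes I: "is_interval I" "I \<subseteq> {0..}" and mono: "strict_antimono_on I f"
    and fe: "\<forall>p q. p \<in> I \<longrightarrow> q \<in> I \<longrightarrow> p + q \<in> I \<longrightarrow>
               f (p + q) = f p * f q - sqrt (1 - (f p)\<^sup>2) * sqrt (1 - (f q)\<^sup>2)"
    and xyz: "x \<in> I" "y \<in> I" "z \<in> I" "f x = a" "f y = b" "f z = c"
    and abc: "\<bar>a - b*c\<bar> \<le> sqrt (1 - b\<^sup>2) * sqrt (1 - c\<^sup>2)"
  shows "x \<le> y + z"
proof (rule ccontr)
  assume "\<not> x \<le> y + z"
  hence lt: "y + z < x" by simp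
  have "z \<ge> 0" using xyz(3) I(2) by auto
  hence le: "y \<le> y + z" by simp
  have yzI: "y + z \<in> I" using mem_is_interval_1_I[OF I(1) xyz(2) xyz(1) le] lt by simp
  have "f (y + z) = f y * f z - sqrt (1 - (f y)\<^sup>2) * sqrt (1 - (f z)\<^sup>2)"
    using fe xyz(2,3) yzI by blast
  hence "f (y + z) = b*c - sqrt (1 - b\<^sup>2) * sqrt (1 - c\<^sup>2)" using xyz(5,6) by simp
  hence "f (y + z) \<le> f x" using abc xyz(4) by linarith
  moreover have "f x < f (y + z)" using monotone_onD[OF mono yzI xyz(1) lt] .
  ultimately show False by simp
qed

theorem theorem4:
  fixes a b c :: real
  assumes B: "psd (vector [vector [1, a, b], vector [a, 1, c], vector [b, c, 1]] :: real^3^3)"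
  shows "(\<forall>(I::real set) (f::real \<Rightarrow> real) (g::real \<Rightarrow> real).
            is_interval I \<and> I \<subseteq> {0..} \<and>
            strict_antimono_on I f \<and> f ` I = {-1..1} \<and>
            (\<forall>p q. p \<in> I \<longrightarrow> q \<in> I \<longrightarrow> p + q \<in> I \<longrightarrow>
               f (p + q) = f p * f q - sqrt (1 - (f p)\<^sup>2) * sqrt (1 - (f q)\<^sup>2)) \<and>
            metric_preserving g
          \<longrightarrow> (let h = g \<circ> the_inv_into I f in h a \<le> h b + h c))
       \<and> (\<forall>k::real. k \<ge> 2 \<longrightarrow>
            (1 - \<bar>a\<bar> powr k) powr (1 / k)
              \<le> (1 - \<bar>b\<bar> powr k) powr (1 / k) + (1 - \<bar>c\<bar> powr k) powr (1 / k))"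
proof -
  have Qa: "\<And>x1 x2 x3. 0 \<le> x1\<^sup>2 + x2\<^sup>2 + x3\<^sup>2 + 2*a*x1*x2 + 2*b*x1*x3 + 2*c*x2*x3"
    using psdQ[OF B] by blast
  have Qb: "\<And>x1 x2 x3. 0 \<le> x1\<^sup>2 + x2\<^sup>2 + x3\<^sup>2 + 2*b*x1*x2 + 2*a*x1*x3 + 2*c*x2*x3"
  proof -
    fix x1 x2 x3 :: real
    show "0 \<le> x1\<^sup>2 + x2\<^sup>2 + x3\<^sup>2 + 2*b*x1*x2 + 2*a*x1*x3 + 2*c*x2*x3"
      using Qa[of x1 x3 x2] by (simp add: algebra_simps)
  qed
  have Qc: "\<And>x1 x2 x3. 0 \<le> x1\<^sup>2 + x2\<^sup>2 + x3\<^sup>2 + 2*c*x1*x2 + 2*a*x1*x3 + 2*b*x2*x3"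
  proof -
    fix x1 x2 x3 :: real
    show "0 \<le> x1\<^sup>2 + x2\<^sup>2 + x3\<^sup>2 + 2*c*x1*x2 + 2*a*x1*x3 + 2*b*x2*x3"
      using Qa[of x3 x1 x2] by (simp add: algebra_simps)
  qed
  note A = Qlem[OF Qa] and Bq = Qlem[OF Qb] and C = Qlem[OF Qc]
  show ?thesis
  proof (intro conjI allI impI)
    fix k :: real assume "2 \<le> k"
    thus "(1 - \<bar>a\<bar> powr k) powr (1 / k)
              \<le> (1 - \<bar>b\<bar> powr k) powr (1 / k) + (1 - \<bar>c\<bar> powr k) powr (1 / k)"
      using part2[of k b c a] A(1,2,3) Bq(1) by blast
  next
    fix I :: "real set" and f g :: "real \<Rightarrow> real"
    assume H: "is_interval I \<and> I \<subseteq> {0..} \<and>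
            strict_antimono_on I f \<and> f ` I = {-1..1} \<and>
            (\<forall>p q. p \<in> I \<longrightarrow> q \<in> I \<longrightarrow> p + q \<in> I \<longrightarrow>
               f (p + q) = f p * f q - sqrt (1 - (f p)\<^sup>2) * sqrt (1 - (f q)\<^sup>2)) \<and>
            metric_preserving g"
    hence I: "is_interval I" "I \<subseteq> {0..}" and mono: "strict_antimono_on I f"
      and img: "f ` I = {-1..1}" and g: "metric_preserving g"
      and fe: "\<forall>p q. p \<in> I \<longrightarrow> q \<in> I \<longrightarrow> p + q \<in> I \<longrightarrow>
               f (p + q) = f p * f q - sqrt (1 - (f p)\<^sup>2) * sqrt (1 - (f q)\<^sup>2)"
      by auto
    have inj: "inj_on f I" using mono strict_antimono_iff_antimono by blast
    have r: "t \<in> f ` I" if "t\<^sup>2 \<le> 1" for t using that img by (simp add: abs_square_le_1 abs_le_iff)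
    define x y z where "x = the_inv_into I f a" "y = the_inv_into I f b" "z = the_inv_into I f c"
    have ra: "a \<in> f ` I" using r Bq(1) by blast
    have rb: "b \<in> f ` I" using r A(1) by blast
    have rc: "c \<in> f ` I" using r A(2) by blast
    have xyz: "x \<in> I" "y \<in> I" "z \<in> I" "f x = a" "f y = b" "f z = c"
      unfolding x_y_z_def
      using the_inv_into_into[OF inj ra order_refl] the_inv_into_into[OF inj rb order_refl]
        the_inv_into_into[OF inj rc order_refl] f_the_inv_into_f[OF inj ra]
        f_the_inv_into_f[OF inj rb] f_the_inv_into_f[OF inj rc] by auto
    have t1: "x \<le> y + z" using part1_ineq[OF I mono fe xyz A(3)] .
    have t2: "y \<le> x + z" using part1_ineq[OF I mono fe xyz(2,1,3,5,4,6) Bq(3)] .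
    have t3: "z \<le> x + y" using part1_ineq[OF I mono fe xyz(3,1,2,6,4,5) C(3)] .
    have nn: "0 \<le> x" "0 \<le> y" "0 \<le> z" using xyz(1,2,3) I(2) by auto
    have "g x \<le> g y + g z" using mp_tri[OF g nn t1 t2 t3] .
    thus "let h = g \<circ> the_inv_into I f in h a \<le> h b + h c"
      unfolding x_y_z_def by simp
  qed
qed

end
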